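(* Let $N\ge1$ and let $Y_1,\dots,Y_N$ be independent random variables, where $Y_i$ is geometrically distributed with success probability $p_i\in(0,1]$. Then $$\mathbb{P}\Big(\sum_{i=1}^NY_i>\frac{N^2}{4\sum_{i=1}^Np_i}\Big)\ge1-\frac{16}{9N}.$$
   Context: A random variable $Y$ is geometric with success probability $p$ if $\mathbb{P}(Y=s)=(1-p)^{s-1}p$ for $s=1,2,\dots$. *)

theory Defs
  imports "HOL-Probability.Probability"
begin

definition geometric_rv :: "'a measure \<Rightarrow> real \<Rightarrow> ('a \<Rightarrow> nat) \<Rightarrow> bool" where
  "geometric_rv M p Y \<longleftrightarrow>
     Y \<in> measurable M (count_space UNIV) \<and>
     (\<forall>s::nat. s \<ge> 1 \<longrightarrow> measure M {x \<in> space M. Y x = s} = (1 - p) ^ (s - 1) * p)"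

end

theory Submission imports Defs begin

lemma nn_integral_nat_rv:
  assumes [measurable]: "Y \<in> measurable M (count_space UNIV)"
  shows "(\<integral>\<^sup>+\<omega>. f (Y \<omega>) \<partial>M) = (\<Sum>s. f s * emeasure M {\<omega>\<in>space M. Y \<omega> = (s::nat)})"
proof -
  have "(\<integral>\<^sup>+\<omega>. f (Y \<omega>) \<partial>M) = (\<integral>\<^sup>+\<omega>. (\<Sum>s. f s * indicator {\<omega>\<in>space M. Y \<omega> = s} \<omega>) \<partial>M)"
  proof (rule nn_integral_cong)
    fix \<omega> assume "\<omega> \<in> space M"
    then have "(\<Sum>s. f s * indicator {\<omega>\<in>space M. Y \<omega> = s} \<omega>) = (\<Sum>s\<in>{Y \<omega>}. f s * indicator {\<omega>\<in>space M. Y \<omega> = s} \<omega>)"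
      by (intro suminf_finite) (auto simp: indicator_def)
    then show "f (Y \<omega>) = (\<Sum>s. f s * indicator {\<omega>\<in>space M. Y \<omega> = s} \<omega>)"
      using \<open>\<omega> \<in> space M\<close> by simp
  qed
  also have "\<dots> = (\<Sum>s. \<integral>\<^sup>+\<omega>. f s * indicator {\<omega>\<in>space M. Y \<omega> = s} \<omega> \<partial>M)"
    by (intro nn_integral_suminf) measurable
  also have "\<dots> = (\<Sum>s. f s * emeasure M {\<omega>\<in>space M. Y \<omega> = (s::nat)})"
    by (intro suminf_cong nn_integral_cmult_indicator) measurable
  finally show ?thesis .
qed

lemma geo_zero:
  assumes "prob_space M" "geometric_rv M p Y" "0 < p" "p \<le> 1"
  shows "emeasure M {\<omega>\<in>space M. Y \<omega> = 0} = 0"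
proof -
  interpret prob_space M by fact
  have meas[measurable]: "Y \<in> measurable M (count_space UNIV)" and
    g: "\<And>s. s \<ge> 1 \<Longrightarrow> measure M {x \<in> space M. Y x = s} = (1 - p) ^ (s - 1) * p"
    using assms(2) unfolding geometric_rv_def by auto
  have "1 = (\<integral>\<^sup>+\<omega>. 1 \<partial>M)" by (simp add: emeasure_space_1)
  also have "\<dots> = (\<Sum>s. 1 * emeasure M {\<omega>\<in>space M. Y \<omega> = (s::nat)})"
    using nn_integral_nat_rv[OF meas, of "\<lambda>_. 1"] by simp
  also have "\<dots> = (\<Sum>s. emeasure M {\<omega>\<in>space M. Y \<omega> = Suc s}) + emeasure M {\<omega>\<in>space M. Y \<omega> = 0}"
    using suminf_offset[of "\<lambda>s. emeasure M {\<omega>\<in>space M. Y \<omega> = s}" 1, OF summableI] by (simp only: mult_1 Suc_eq_plus1 lessThan_Suc sum.empty sum.insert lessThan_0 finite.emptyI empty_iff add_0 add_0_right, simp)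
  also have "(\<Sum>s. emeasure M {\<omega>\<in>space M. Y \<omega> = Suc s}) = (\<Sum>s. ennreal ((1 - p) ^ s * p))"
    by (intro suminf_cong) (simp add: emeasure_eq_measure g)
  also have "\<dots> = ennreal (\<Sum>s. (1 - p) ^ s * p)"
    using assms by (intro suminf_ennreal2) (auto intro!: summable_mult2 summable_geometric)
  also have "(\<Sum>s. (1 - p) ^ s * p) = 1"
    using assms by (simp add: suminf_mult2[symmetric] suminf_geometric)
  finally have "1 = 1 + emeasure M {\<omega>\<in>space M. Y \<omega> = 0}" by simp
  then have "1 + 0 = 1 + emeasure M {\<omega>\<in>space M. Y \<omega> = 0}" by simp
  then show ?thesis unfolding ennreal_add_left_cancel by simp
qed

lemma geo_pgf:
  assumes "prob_space M" "geometric_rv M p Y" "0 < p" "p \<le> 1" "0 \<le> z" "z < 1"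
  shows "(\<integral>\<^sup>+\<omega>. ennreal (z ^ Y \<omega>) \<partial>M) = ennreal (p * z / (1 - (1 - p) * z))"
proof -
  interpret prob_space M by fact
  have meas[measurable]: "Y \<in> measurable M (count_space UNIV)" and
    g: "\<And>s. s \<ge> 1 \<Longrightarrow> measure M {x \<in> space M. Y x = s} = (1 - p) ^ (s - 1) * p"
    using assms(2) unfolding geometric_rv_def by auto
  have z0: "emeasure M {\<omega>\<in>space M. Y \<omega> = 0} = 0" by (rule geo_zero[OF assms(1-4)])
  have q1: "0 \<le> (1 - p) * z" using assms by simp
  have "(1 - p) * z \<le> z" using assms by (intro mult_left_le_one_le) auto
  then have q2: "(1 - p) * z < 1" using assms by linarith
  note q = q1 q2
  have "(\<integral>\<^sup>+\<omega>. ennreal (z ^ Y \<omega>) \<partial>M) = (\<Sum>s. ennreal (z ^ s) * emeasure M {\<omega>\<in>space M. Y \<omega> = (s::nat)})"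
    by (rule nn_integral_nat_rv[OF meas])
  also have "\<dots> = (\<Sum>s. ennreal (z ^ Suc s) * emeasure M {\<omega>\<in>space M. Y \<omega> = Suc s}) + ennreal (z ^ 0) * emeasure M {\<omega>\<in>space M. Y \<omega> = 0}"
  proof -
    have h1: "(\<Sum>j<(1::nat). ennreal (z ^ j) * emeasure M {\<omega>\<in>space M. Y \<omega> = j}) = ennreal (z ^ 0) * emeasure M {\<omega>\<in>space M. Y \<omega> = 0}"
      by simp
    show ?thesis
      using suminf_offset[of "\<lambda>s. ennreal (z ^ s) * emeasure M {\<omega>\<in>space M. Y \<omega> = s}" 1, OF summableI]
      by (simp only: Suc_eq_plus1 h1)
  qed
  also have "\<dots> = (\<Sum>s. ennreal (p * z * ((1 - p) * z) ^ s))"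
    unfolding z0 mult_zero_right add_0_right
  proof (intro suminf_cong)
    fix s
    have "ennreal (z ^ Suc s) * emeasure M {\<omega>\<in>space M. Y \<omega> = Suc s} = ennreal (z ^ Suc s) * ennreal ((1 - p) ^ s * p)"
      by (simp add: emeasure_eq_measure g)
    also have "\<dots> = ennreal (z ^ Suc s * ((1 - p) ^ s * p))"
      using assms by (intro ennreal_mult[symmetric]) auto
    also have "z ^ Suc s * ((1 - p) ^ s * p) = p * z * ((1 - p) * z) ^ s"
      by (simp add: power_mult_distrib mult_ac)
    finally show "ennreal (z ^ Suc s) * emeasure M {\<omega>\<in>space M. Y \<omega> = Suc s} = ennreal (p * z * ((1 - p) * z) ^ s)" .
  qed
  also have "\<dots> = ennreal (\<Sum>s. p * z * ((1 - p) * z) ^ s)"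
    using assms q by (intro suminf_ennreal2) (auto intro!: summable_mult summable_geometric)
  also have "(\<Sum>s. p * z * ((1 - p) * z) ^ s) = p * z / (1 - (1 - p) * z)"
    using q by (simp add: suminf_mult suminf_geometric divide_inverse)
  finally show ?thesis .
qed

lemma amgm_pow:
  fixes x :: "'a \<Rightarrow> real"
  assumes "finite A" "A \<noteq> {}" "\<And>i. i \<in> A \<Longrightarrow> x i \<ge> 0"
  shows "(\<Prod>i\<in>A. x i) \<le> ((\<Sum>i\<in>A. x i) / card A) ^ card A"
proof -
  have c: "card A > 0" using assms by (simp add: card_gt_0_iff)
  have "(\<Prod>i\<in>A. x i) powr (1 / card A) \<le> (\<Sum>i\<in>A. x i / card A)"
    using arith_geom_mean[OF assms] by simp
  also have "\<dots> = (\<Sum>i\<in>A. x i) / card A" by (simp add: sum_divide_distrib)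
  finally have h: "(\<Prod>i\<in>A. x i) powr (1 / card A) \<le> (\<Sum>i\<in>A. x i) / card A" .
  have p0: "(\<Prod>i\<in>A. x i) \<ge> 0" using assms by (simp add: prod_nonneg)
  have "(\<Prod>i\<in>A. x i) = ((\<Prod>i\<in>A. x i) powr (1 / card A)) ^ card A"
  proof (cases "(\<Prod>i\<in>A. x i) = 0")
    case True then show ?thesis using c by simp
  next
    case False
    then have "(\<Prod>i\<in>A. x i) > 0" using p0 by simp
    then show ?thesis using c by (simp add: powr_realpow[symmetric] powr_powr)
  qed
  also have "\<dots> \<le> ((\<Sum>i\<in>A. x i) / card A) ^ card A"
    using h by (intro power_mono) auto
  finally show ?thesis .
qed

lemma prod_bound:
  fixes p :: "'a \<Rightarrow> real"
  assumes "finite A" "A \<noteq> {}" "\<And>i. i \<in> A \<Longrightarrow> p i > 0"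
  defines "n \<equiv> real (card A)" and "P \<equiv> (\<Sum>i\<in>A. p i)"
  shows "(\<Prod>i\<in>A. n * p i / (P + n * p i)) \<le> (1/2) ^ card A"
proof -
  have n0: "n > 0" using assms by (simp add: n_def card_gt_0_iff)
  have P0: "P > 0" unfolding P_def using assms by (intro sum_pos) auto
  have am: "(\<Prod>i\<in>A. p i) \<le> (P / n) ^ card A"
    unfolding P_def n_def using assms by (intro amgm_pow) (auto intro: less_imp_le)
  have pp: "(\<Prod>i\<in>A. p i) > 0" using assms by (intro prod_pos) auto
  have sq: "(\<Prod>i\<in>A. 2 * n * p i) ^ 2 \<le> (\<Prod>i\<in>A. P + n * p i) ^ 2"
  proof -
    have "(\<Prod>i\<in>A. 2 * n * p i) ^ 2 = 4 ^ card A * (n^2) ^ card A * (\<Prod>i\<in>A. p i) * (\<Prod>i\<in>A. p i)"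
    proof -
      have f: "(4::real) ^ card A = 2 ^ card A * 2 ^ card A" by (simp add: power_mult_distrib[symmetric])
      show ?thesis by (simp add: prod.distrib power2_eq_square power_mult_distrib mult_ac f)
    qed
    also have "\<dots> \<le> 4 ^ card A * (n^2) ^ card A * (P / n) ^ card A * (\<Prod>i\<in>A. p i)"
      using am pp n0 by (intro mult_right_mono mult_left_mono) auto
    also have "\<dots> = (\<Prod>i\<in>A. 4 * P * n * p i)"
    proof -
      have a: "(\<Prod>i\<in>A. 4 * P * n * p i) = 4 ^ card A * P ^ card A * n ^ card A * (\<Prod>i\<in>A. p i)"
        by (simp only: prod.distrib prod_constant power_mult_distrib)
      have b: "n^2 * (P / n) = P * n" using n0 by (simp add: power2_eq_square)
      have c: "(n^2) ^ card A * (P / n) ^ card A = P ^ card A * n ^ card A"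
        by (metis b power_mult_distrib)
      show ?thesis unfolding a using c by (metis (no_types, lifting) mult.assoc)
    qed
    also have "\<dots> \<le> (\<Prod>i\<in>A. (P + n * p i) ^ 2)"
    proof (intro prod_mono conjI)
      fix i assume "i \<in> A"
      show "0 \<le> 4 * P * n * p i" using P0 n0 assms(3)[OF \<open>i\<in>A\<close>] by simp
      have "0 \<le> (P - n * p i)^2" by simp
      then show "4 * P * n * p i \<le> (P + n * p i) ^ 2" by (simp add: power2_eq_square algebra_simps)
    qed
    also have "\<dots> = (\<Prod>i\<in>A. P + n * p i) ^ 2" by (simp add: prod_power_distrib)
    finally show ?thesis .
  qed
  have pos: "(\<Prod>i\<in>A. P + n * p i) > 0" using P0 n0 assms by (intro prod_pos) (auto intro!: add_pos_pos)
  have le: "(\<Prod>i\<in>A. 2 * n * p i) \<le> (\<Prod>i\<in>A. P + n * p i)"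
    by (rule power2_le_imp_le[OF sq]) (use pos in linarith)
  have "(\<Prod>i\<in>A. n * p i / (P + n * p i)) = (\<Prod>i\<in>A. n * p i) / (\<Prod>i\<in>A. P + n * p i)"
    by (simp add: prod_dividef)
  also have "(\<Prod>i\<in>A. n * p i) = (1/2)^card A * (\<Prod>i\<in>A. 2 * n * p i)"
  proof -
    have a: "(\<Prod>i\<in>A. 2 * n * p i) = 2^card A * (\<Prod>i\<in>A. n * p i)"
      by (simp only: prod.distrib prod_constant mult.assoc)
    have b: "(1/2::real)^card A * 2^card A = 1" by (simp add: power_mult_distrib[symmetric])
    show ?thesis unfolding a by (simp only: mult.assoc[symmetric] b mult_1)
  qed
  also have "(1/2)^card A * (\<Prod>i\<in>A. 2 * n * p i) / (\<Prod>i\<in>A. P + n * p i) \<le> (1/2)^card A"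
    using le pos by (simp add: divide_le_eq mult_left_mono)
  finally show ?thesis .
qed

lemma pow_bound: "n \<ge> 1 \<Longrightarrow> real n * (2/3) ^ n \<le> 8/9"
proof (induction n rule: nat_induct_at_least)
  case base then show ?case by simp
next
  case (Suc n)
  show ?case
  proof (cases "n = 1")
    case True then show ?thesis by (simp add: numeral_eq_Suc)
  next
    case False
    then have "n \<ge> 2" using Suc by simp
    then have "real (Suc n) * (2/3) ^ Suc n \<le> real n * (2/3)^n"
      by (simp add: field_simps)
    then show ?thesis using Suc by linarith
  qed
qed

lemma final_bound:
  assumes "n \<ge> 1"
  shows "exp (real n / 4) * (1/2) ^ n \<le> 16 / (9 * real n)"
proof -
  have e: "exp (1/4::real) \<le> 4/3"
  proof -
    have a: "3/4 \<le> exp (-1/4::real)" using exp_ge_add_one_self[of "-1/4::real"] by simp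
    have "exp (1/4::real) = 1 / exp (-1/4)" by (simp add: exp_minus field_simps)
    also have "\<dots> \<le> 1 / (3/4)" using a by (intro divide_left_mono) auto
    finally show ?thesis by simp
  qed
  have "exp (real n / 4) = exp (1/4) ^ n" by (simp add: exp_of_nat_mult[symmetric])
  also have "\<dots> \<le> (4/3) ^ n" using e by (intro power_mono) auto
  finally have "exp (real n / 4) * (1/2) ^ n \<le> (4/3)^n * (1/2)^n" by (simp add: mult_right_mono)
  also have "\<dots> = (2/3)^n" by (simp add: power_mult_distrib[symmetric])
  finally have h: "exp (real n / 4) * (1/2) ^ n \<le> (2/3)^n" .
  have "real n * (2/3)^n \<le> 16/9" using pow_bound[OF assms] by simp
  then have "(2/3::real)^n \<le> 16 / (9 * real n)" using assms by (simp add: field_simps)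
  with h show ?thesis by linarith
qed

theorem lemma2p4:
  fixes M :: "'a measure" and N :: nat and p :: "nat \<Rightarrow> real" and Y :: "nat \<Rightarrow> 'a \<Rightarrow> nat"
  assumes "prob_space M"
    and "N \<ge> 1"
    and "\<And>i. i \<in> {1..N} \<Longrightarrow> 0 < p i \<and> p i \<le> 1"
    and "prob_space.indep_vars M (\<lambda>_. count_space UNIV) Y {1..N}"
    and "\<And>i. i \<in> {1..N} \<Longrightarrow> geometric_rv M (p i) (Y i)"
  shows "measure M {x \<in> space M. real (\<Sum>i=1..N. Y i x) > real N ^ 2 / (4 * (\<Sum>i=1..N. p i))}
           \<ge> 1 - 16 / (9 * real N)"
proof -
  interpret prob_space M by fact
  define I where "I = {1..N}"
  have fin: "finite I" and ne: "I \<noteq> {}" and cardI: "card I = N"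
    using assms(2) by (auto simp: I_def)
  define P where "P = (\<Sum>i\<in>I. p i)"
  have pI: "\<And>i. i \<in> I \<Longrightarrow> 0 < p i \<and> p i \<le> 1" using assms(3) by (simp add: I_def)
  have P0: "P > 0" unfolding P_def using fin ne pI by (intro sum_pos) auto
  have N0: "real N > 0" using assms(2) by simp
  define z where "z = real N / (real N + P)"
  have z0: "0 < z" and z1: "z < 1" using N0 P0 by (auto simp: z_def field_simps)
  define t where "t = real N ^ 2 / (4 * P)"
  have meas[measurable]: "\<And>i. i \<in> I \<Longrightarrow> Y i \<in> measurable M (count_space UNIV)"
    using assms(5) by (auto simp: I_def geometric_rv_def)
  have rY: "\<And>i. i \<in> I \<Longrightarrow> (\<lambda>x. real (Y i x)) \<in> borel_measurable M"
    by (rule measurable_compose[OF meas]) auto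
  have Sm[measurable]: "(\<lambda>x. \<Sum>i\<in>I. real (Y i x)) \<in> borel_measurable M"
    by (intro borel_measurable_sum rY)
  define E where "E = {x \<in> space M. (\<Sum>i\<in>I. real (Y i x)) \<le> t}"
  have Eev: "E \<in> events" unfolding E_def by measurable
  have target: "{x \<in> space M. real (\<Sum>i=1..N. Y i x) > real N ^ 2 / (4 * (\<Sum>i=1..N. p i))} = space M - E"
    by (auto simp: E_def t_def P_def I_def)
  define u where "u x = (\<Prod>i\<in>I. ennreal (z ^ Y i x))" for x
  have um: "u \<in> borel_measurable M"
    unfolding u_def by (intro borel_measurable_prod_ennreal measurable_compose[OF meas]) auto
  have u_eq: "u x = ennreal (z ^ (\<Sum>i\<in>I. Y i x))" for x
    unfolding u_def using z0 by (simp add: prod_ennreal power_sum)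
  have key: "1 \<le> exp (real N / 4) * z ^ s" if "real s \<le> t" for s :: nat
  proof -
    have nz: "real N + P \<noteq> 0" using N0 P0 by linarith
    have e1: "1 + P / real N = (real N + P) / real N" using N0 by (simp add: field_simps)
    have a: "z * (1 + P / real N) = 1" unfolding e1 z_def using N0 nz by simp
    have "(1 + P / real N) ^ s \<le> exp (P / real N) ^ s"
      using P0 N0 by (intro power_mono) (auto simp: add_pos_pos less_imp_le)
    also have "\<dots> = exp (real s * (P / real N))" by (rule exp_of_nat_mult[symmetric])
    also have "\<dots> \<le> exp (t * (P / real N))"
      using that P0 N0 by (intro iffD2[OF exp_le_cancel_iff] mult_right_mono) auto
    also have "t * (P / real N) = real N / 4" using P0 N0 by (simp add: t_def power2_eq_square)
    finally have b: "(1 + P / real N) ^ s \<le> exp (real N / 4)" .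
    have "1 = z ^ s * (1 + P / real N) ^ s" by (simp add: power_mult_distrib[symmetric] a)
    also have "\<dots> \<le> z ^ s * exp (real N / 4)" using b z0 by (intro mult_left_mono) auto
    finally show ?thesis by (simp add: mult.commute)
  qed
  have qnn: "0 \<le> real N * p i / (P + real N * p i)" if i: "i \<in> I" for i
  proof -
    have a: "0 < real N * p i" using N0 pI[OF i] by simp
    then show "0 \<le> real N * p i / (P + real N * p i)" using P0 by simp
  qed
  have qp: "0 \<le> (\<Prod>i\<in>I. real N * p i / (P + real N * p i))" using qnn by (rule prod_nonneg)
  have "emeasure M E \<le> emeasure M {x \<in> space M. 1 \<le> ennreal (exp (real N / 4)) * u x}"
  proof (rule emeasure_mono)
    show "E \<subseteq> {x \<in> space M. 1 \<le> ennreal (exp (real N / 4)) * u x}"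
    proof safe
      fix x assume "x \<in> E"
      then have x: "x \<in> space M" "real (\<Sum>i\<in>I. Y i x) \<le> t" by (auto simp: E_def)
      have "ennreal (exp (real N / 4)) * u x = ennreal (exp (real N / 4) * z ^ (\<Sum>i\<in>I. Y i x))"
        using z0 by (simp add: u_eq ennreal_mult)
      then show "1 \<le> ennreal (exp (real N / 4)) * u x"
        using key[OF x(2)] by (simp add: ennreal_1[symmetric] del: ennreal_1)
    qed (auto simp: E_def)
  qed (use um in measurable)
  also have "\<dots> \<le> ennreal (exp (real N / 4)) * (\<integral>\<^sup>+ x. u x * indicator (space M) x \<partial>M)"
    using um by (intro nn_integral_Markov_inequality) auto
  also have "(\<integral>\<^sup>+ x. u x * indicator (space M) x \<partial>M) = (\<integral>\<^sup>+ x. u x \<partial>M)"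
    by (intro nn_integral_cong) simp
  also have "\<dots> = (\<Prod>i\<in>I. \<integral>\<^sup>+ x. ennreal (z ^ Y i x) \<partial>M)"
    unfolding u_def
  proof (rule indep_vars_nn_integral[OF fin])
    show "indep_vars (\<lambda>_. borel) (\<lambda>i x. ennreal (z ^ Y i x)) I"
      using indep_vars_compose2[OF assms(4), of "\<lambda>i n. ennreal (z ^ n)" "\<lambda>_. borel"]
      by (simp add: I_def)
  qed auto
  also have "\<dots> = (\<Prod>i\<in>I. ennreal (real N * p i / (P + real N * p i)))"
  proof (intro prod.cong refl)
    fix i assume i: "i \<in> I"
    have "(\<integral>\<^sup>+ x. ennreal (z ^ Y i x) \<partial>M) = ennreal (p i * z / (1 - (1 - p i) * z))"
      using pI[OF i] z0 z1 assms(5)[of i] i by (intro geo_pgf[OF assms(1)]) (auto simp: I_def)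
    also have "p i * z / (1 - (1 - p i) * z) = real N * p i / (P + real N * p i)"
    proof -
      have nz: "real N + P \<noteq> 0" using N0 P0 by linarith
      have pp: "P + real N * p i > 0" using N0 P0 pI[OF i] by (simp add: add_pos_pos)
      have d: "1 - (1 - p i) * z = (P + real N * p i) / (real N + P)"
        using nz by (simp add: z_def field_simps)
      have zz: "z * (real N + P) = real N" using nz by (simp add: z_def)
      have "p i * z / ((P + real N * p i) / (real N + P)) = p i * (z * (real N + P)) / (P + real N * p i)"
        by (simp only: divide_divide_eq_right mult.assoc)
      then show ?thesis unfolding d zz by (simp add: mult.commute)
    qed
    finally show "(\<integral>\<^sup>+ x. ennreal (z ^ Y i x) \<partial>M) = ennreal (real N * p i / (P + real N * p i))" .
  qed
  also have "\<dots> = ennreal (\<Prod>i\<in>I. real N * p i / (P + real N * p i))"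
    using qnn by (intro prod_ennreal)
  finally have "emeasure M E \<le> ennreal (exp (real N / 4) * (\<Prod>i\<in>I. real N * p i / (P + real N * p i)))"
    using qp by (simp add: ennreal_mult)
  then have mE: "measure M E \<le> exp (real N / 4) * (\<Prod>i\<in>I. real N * p i / (P + real N * p i))"
    using qp by (simp add: emeasure_eq_measure ennreal_le_iff)
  have "(\<Prod>i\<in>I. real N * p i / (P + real N * p i)) \<le> (1/2) ^ N"
    using prod_bound[OF fin ne, of p] pI by (simp add: cardI P_def)
  then have "measure M E \<le> exp (real N / 4) * (1/2) ^ N"
    using mE by (meson exp_gt_zero less_imp_le mult_left_mono order_trans)
  also have "\<dots> \<le> 16 / (9 * real N)" by (rule final_bound[OF assms(2)])
  finally have "measure M E \<le> 16 / (9 * real N)" .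
  then show ?thesis unfolding target using prob_compl[OF Eev] by simp
qed

end
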